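(* Let $X$ be a topological space with $|X|\ge 2$ and $G$ an infinite Abelian group. If $X$ admits a non-constant continuous real-valued function, then every Korovin orbit $G_f$ in $X^G$ is functionally Hausdorff.
   Context: $X^G$ carries the product topology. For $f\in X^G$ and $g\in G$ let $gf\in X^G$ be given by $(gf)(x)=f(xg)$, and let $G_f=\{gf:g\in G\}\subseteq X^G$ with the subspace topology. The map $f\colon G\to X$ is a Korovin mapping if $\pi_M(G_f)=X^M$ for every countable $M\subseteq G$, where $\pi_M\colon X^G\to X^M$ is the projection; in that case $G_f$ is called a Korovin orbit. A space is functionally Hausdorff if continuous real-valued functions on it separate its points. *)

theory Defs
  imports "HOL-Analysis.Analysis"
begin

definition shift_act :: "'g::ab_group_add \<Rightarrow> ('g \<Rightarrow> 'a) \<Rightarrow> ('g \<Rightarrow> 'a)" where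
  "shift_act g f = (\<lambda>x. f (x + g))"

definition orbit_of :: "('g::ab_group_add \<Rightarrow> 'a) \<Rightarrow> ('g \<Rightarrow> 'a) set" where
  "orbit_of f = range (\<lambda>g. shift_act g f)"

definition power_top :: "'a topology \<Rightarrow> ('g \<Rightarrow> 'a) topology" where
  "power_top X = product_topology (\<lambda>_. X) UNIV"

definition korovin_mapping :: "'a topology \<Rightarrow> ('g::ab_group_add \<Rightarrow> 'a) \<Rightarrow> bool" where
  "korovin_mapping X f \<longleftrightarrow> (\<forall>x. f x \<in> topspace X) \<and>
     (\<forall>M. countable M \<longrightarrow>
        (\<lambda>h. restrict h M) ` orbit_of f = PiE M (\<lambda>_. topspace X))"

definition functionally_hausdorff :: "'a topology \<Rightarrow> bool" where
  "functionally_hausdorff T \<longleftrightarrow>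
     (\<forall>x\<in>topspace T. \<forall>y\<in>topspace T. x \<noteq> y \<longrightarrow>
        (\<exists>h. continuous_map T euclideanreal h \<and> h x \<noteq> h y))"

end

theory Submission
  imports Defs
begin

theorem proposition4p3:
  fixes X :: "'a topology" and f :: "'g::ab_group_add \<Rightarrow> 'a"
  assumes "infinite (UNIV :: 'g set)"
    and "\<exists>a\<in>topspace X. \<exists>b\<in>topspace X. a \<noteq> b"
    and "\<exists>h. continuous_map X euclideanreal h \<and>
           (\<exists>a\<in>topspace X. \<exists>b\<in>topspace X. h a \<noteq> h b)"
    and "korovin_mapping X f"
  shows "functionally_hausdorff (subtopology (power_top X) (orbit_of f))"
proof -
  obtain h a b where h: "continuous_map X euclideanreal h" and a: "a \<in> topspace X"
    and b: "b \<in> topspace X" and hab: "h a \<noteq> h b" using assms(3) by blast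
  have K: "\<And>M. countable M \<Longrightarrow> (\<lambda>h. restrict h M) ` orbit_of f = PiE M (\<lambda>_. topspace X)"
    using assms(4) unfolding korovin_mapping_def by blast
  show ?thesis unfolding functionally_hausdorff_def
  proof (intro ballI impI)
    fix u v assume u: "u \<in> topspace (subtopology (power_top X) (orbit_of f))"
      and v: "v \<in> topspace (subtopology (power_top X) (orbit_of f))" and uv: "u \<noteq> v"
    from u obtain g where g: "u = shift_act g f" unfolding orbit_of_def by auto
    from v obtain g' where g': "v = shift_act g' f" unfolding orbit_of_def by auto
    define d where "d = g' - g"
    have d0: "d \<noteq> 0" using uv g g' d_def by auto
    define w where "w = (\<lambda>i::'g. if i = 0 then a else if i = d then b else undefined)"
    have "w \<in> PiE {0, d} (\<lambda>_. topspace X)" using a b d0 unfolding w_def by (auto simp: PiE_def extensional_def)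
    then have "w \<in> (\<lambda>h. restrict h {0,d}) ` orbit_of f" using K[of "{0,d}"] by auto
    then obtain k where k: "restrict (shift_act k f) {0,d} = w" unfolding orbit_of_def by auto
    have fk: "f k = a" using fun_cong[OF k, of 0] unfolding w_def shift_act_def by auto
    have fkd: "f (d + k) = b" using fun_cong[OF k, of d] d0 unfolding w_def shift_act_def by auto
    define x where "x = k - g"
    have cm: "continuous_map (subtopology (power_top X) (orbit_of f)) euclideanreal (\<lambda>u. h (u x))"
      unfolding power_top_def
      by (rule continuous_map_from_subtopology, rule continuous_map_compose[OF _ h, unfolded o_def])
         (rule continuous_map_product_projection, simp)
    have "h (u x) = h a" using fk g unfolding x_def shift_act_def by simp
    moreover have "h (v x) = h b" using fkd g' unfolding x_def d_def shift_act_def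
      by (simp add: algebra_simps)
    ultimately show "\<exists>h. continuous_map (subtopology (power_top X) (orbit_of f)) euclideanreal h \<and> h u \<noteq> h v"
      using cm hab by metis
  qed
qed

end
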